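(* Let \(m\) be a positive integer that is not a perfect square, let \(a,b,c\) be positive integers with \(\gcd(am,b^2-c^2m)=1\), and let \(A,B\in\mathbb Z\). If \(A\geq abm+acm-am-cm-b+1\) and \(B\geq acm+ab-a-b-c+1\), then there exist \(x,y,z,w\in\mathbb N\) with \(a\sqrt m(x+y\sqrt m)+(b+c\sqrt m)(z+w\sqrt m)=A+B\sqrt m\).
   Context: \(\mathbb N\) denotes the set of non-negative integers. *)

theory Defs
  imports Complex_Main
begin

end

theory Submission
  imports Defs
begin

theorem theorem3:
  fixes m a b c :: nat and A B :: int
  assumes "m > 0" and "\<not> (\<exists>k::nat. m = k ^ 2)"
    and "a > 0" and "b > 0" and "c > 0"
    and "gcd (int a * int m) (int b ^ 2 - int c ^ 2 * int m) = 1"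
    and "A \<ge> int a * int b * int m + int a * int c * int m - int a * int m - int c * int m - int b + 1"
    and "B \<ge> int a * int c * int m + int a * int b - int a - int b - int c + 1"
  shows "\<exists>x y z w :: nat.
     real a * sqrt (real m) * (real x + real y * sqrt (real m))
       + (real b + real c * sqrt (real m)) * (real z + real w * sqrt (real m))
     = real_of_int A + real_of_int B * sqrt (real m)"
proof -
  define M where "M = int a * int m"
  define D where "D = int b ^ 2 - int c ^ 2 * int m"
  have Mpos: "M > 0" using assms(1,3) by (simp add: M_def)
  obtain v u where uv: "v * M + u * D = 1"
    using bezout_int[of M D] assms(6) unfolding M_def D_def by auto
  define z0 where "z0 = u * (int b * A - int c * int m * B)"
  define w0 where "w0 = u * (int b * B - int c * A)"
  define z where "z = z0 mod M"
  define w where "w = w0 mod int a"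
  define k1 where "k1 = z0 div M"
  define k2 where "k2 = w0 div int a"
  have z0e: "z0 = z + M * k1" unfolding z_def k1_def by simp
  have w0e: "w0 = w + int a * k2" unfolding w_def k2_def by simp
  have e1: "int b * z0 + int c * int m * w0 = u * D * A"
    unfolding z0_def w0_def D_def by (simp add: algebra_simps power2_eq_square)
  have e2: "int c * z0 + int b * w0 = u * D * B"
    unfolding z0_def w0_def D_def by (simp add: algebra_simps power2_eq_square)
  define t where "t = v * A + int b * k1 + int c * k2"
  define s where "s = v * int m * B + int c * int m * k1 + int b * k2"
  have At: "A = M * t + int b * z + int c * int m * w"
  proof -
    have "u * D * A = (1 - v * M) * A" using uv by (metis add_diff_cancel_left')
    then have "int b * z0 + int c * int m * w0 = A - v * M * A" using e1 by (simp add: algebra_simps)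
    then show ?thesis unfolding z0e w0e t_def M_def
      by (simp add: algebra_simps)
  qed
  have Bs: "B = int a * s + int c * z + int b * w"
  proof -
    have "u * D * B = (1 - v * M) * B" using uv by (metis add_diff_cancel_left')
    then have "int c * z0 + int b * w0 = B - v * M * B" using e2 by (simp add: algebra_simps)
    then show ?thesis unfolding z0e w0e s_def M_def
      by (simp add: algebra_simps)
  qed
  have z0: "0 \<le> z" "z \<le> M - 1" using Mpos unfolding z_def by auto
  have w0: "0 \<le> w" "w \<le> int a - 1" using assms(3) unfolding w_def by auto
  have bz: "int b * z \<le> int b * (M - 1)" using z0 by (simp add: mult_left_mono)
  have cz: "int c * z \<le> int c * (M - 1)" using z0 by (simp add: mult_left_mono)
  have bw: "int b * w \<le> int b * (int a - 1)" using w0 by (simp add: mult_left_mono)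
  have cw: "int c * int m * w \<le> int c * int m * (int a - 1)" using w0 by (simp add: mult_left_mono)
  have "M * t > - M"
    using At bz cw assms(7) unfolding M_def by (simp add: algebra_simps)
  then have t0: "t \<ge> 0"
  proof -
    assume h: "M * t > - M"
    show ?thesis
    proof (rule ccontr)
      assume "\<not> t \<ge> 0"
      then have "t \<le> -1" by simp
      then have "M * t \<le> M * (-1)" using Mpos mult_left_mono[of t "-1" M] by simp
      then show False using h by simp
    qed
  qed
  have "int a * s > - int a"
    using Bs cz bw assms(8) unfolding M_def by (simp add: algebra_simps)
  then have s0: "s \<ge> 0"
  proof -
    assume h: "int a * s > - int a"
    show ?thesis
    proof (rule ccontr)
      assume "\<not> s \<ge> 0"
      then have "s \<le> -1" by simp
      then have "int a * s \<le> int a * (-1)" using mult_left_mono[of s "-1" "int a"] by simp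
      then show False using h by simp
    qed
  qed
  have rA: "real_of_int A = real a * real m * of_int t + real b * of_int z + real c * real m * of_int w"
    using arg_cong[OF At, of real_of_int] unfolding M_def by simp
  have rB: "real_of_int B = real a * of_int s + real c * of_int z + real b * of_int w"
    using arg_cong[OF Bs, of real_of_int] by simp
  define r where "r = sqrt (real m)"
  have sq: "r * r = real m" unfolding r_def by simp
  have ns: "real (nat s) = of_int s" "real (nat t) = of_int t"
    "real (nat z) = of_int z" "real (nat w) = of_int w" using s0 t0 z0 w0 by simp_all
  have key: "real a * r * (of_int s + of_int t * r) + (real b + real c * r) * (of_int z + of_int w * r)
     = (real a * of_int t * (r * r) + real b * of_int z + real c * of_int w * (r * r))
       + (real a * of_int s + real c * of_int z + real b * of_int w) * r"
    by (simp add: algebra_simps)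
  show ?thesis
  proof (intro exI)
    show "real a * sqrt (real m) * (real (nat s) + real (nat t) * sqrt (real m))
       + (real b + real c * sqrt (real m)) * (real (nat z) + real (nat w) * sqrt (real m))
     = real_of_int A + real_of_int B * sqrt (real m)"
      unfolding r_def[symmetric] ns key sq rA rB by (simp add: algebra_simps)
  qed
qed

end
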